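(* Let $M=\mathbb{S}^3\times\mathbb{S}^3=SU(2)\times SU(2)$. Let $\{E^1,E^2,E^3\}$ and $\{F^1,F^2,F^3\}$ be left-invariant coframes on the two factors satisfying $$dE^1=-2E^2\wedge E^3,\quad dE^2=2E^1\wedge E^3,\quad dE^3=-2E^1\wedge E^2,$$ and the analogous equations for $F^1,F^2,F^3$. Let $J$ be the (integrable, Calabi–Eckmann) complex structure on $M$ whose $(1,0)$-forms are spanned by $$\psi^1=E^1+iE^2,\qquad \psi^2=F^1+iF^2,\qquad \psi^3=E^3+iF^3.$$ Then for every Gauduchon metric on $(M,J)$, i.e. every Hermitian metric whose fundamental form $\omega$ satisfies $\partial\overline{\partial}\omega^2=0$, one has $0\ne[\omega^2]_A\in H^{2,2}_A(M)$.
   Context: The structure equations of $J$ are $$d\psi^1=i\psi^{13}+i\psi^{1\bar3},\qquad d\psi^2=\psi^{23}-\psi^{2\bar3},\qquad d\psi^3=-i\psi^{1\bar1}+\psi^{2\bar2},$$ where $\psi^{j\bar k}=\psi^j\wedge\overline{\psi^k}$, and similarly for other multi-indices. The Aeppli cohomology is $$H^{p,q}_{A}(M)=\frac{\ker\partial\overline{\partial}}{\operatorname{im}\partial+\operatorname{im}\overline{\partial}},$$ computed on smooth $(p,q)$-forms. *)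

theory Defs
  imports "HOL-Analysis.Analysis" "HOL-Library.Function_Algebras"
begin

text \<open>Quaternion a + b i + c j + d k is represented as (a,b,c,d).\<close>
type_synonym quat = "real \<times> real \<times> real \<times> real"

fun qmult :: "quat \<Rightarrow> quat \<Rightarrow> quat" where
  "qmult (a1,b1,c1,d1) (a2,b2,c2,d2) =
     (a1*a2 - b1*b2 - c1*c2 - d1*d2,
      a1*b2 + b1*a2 + c1*d2 - d1*c2,
      a1*c2 - b1*d2 + c1*a2 + d1*b2,
      a1*d2 + b1*c2 - c1*b2 + d1*a2)"

fun qnorm2 :: "quat \<Rightarrow> real" where
  "qnorm2 (a,b,c,d) = a^2 + b^2 + c^2 + d^2"

definition SU2 :: "quat set" where
  "SU2 = {q. qnorm2 q = 1}"

type_synonym pt = "quat \<times> quat"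

definition Mspace :: "pt set" where
  "Mspace = SU2 \<times> SU2"

text \<open>exp(t e) for the unit quaternions e = i, j, k (index 0,1,2).\<close>
definition qexp :: "nat \<Rightarrow> real \<Rightarrow> quat" where
  "qexp a t = (if a = 0 then (cos t, sin t, 0, 0)
               else if a = 1 then (cos t, 0, sin t, 0)
               else (cos t, 0, 0, sin t))"

text \<open>Flows of the left-invariant vector fields X1,X2,X3 (indices 0,1,2, first factor,
  X_a(p) = p e_a) and Y1,Y2,Y3 (indices 3,4,5, second factor).  These are the frames
  dual to the coframes E^1,E^2,E^3 resp. F^1,F^2,F^3; one has [X1,X2] = 2 X3 etc., so
  dE^1 = -2 E^23, dE^2 = 2 E^13, dE^3 = -2 E^12, and likewise for F.\<close>
definition flow :: "nat \<Rightarrow> real \<Rightarrow> pt \<Rightarrow> pt" where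
  "flow i t x = (if i < 3 then (qmult (fst x) (qexp i t), snd x)
                 else if i < 6 then (fst x, qmult (snd x) (qexp (i - 3) t))
                 else x)"

definition Xd :: "nat \<Rightarrow> (pt \<Rightarrow> complex) \<Rightarrow> pt \<Rightarrow> complex" where
  "Xd i f x = vector_derivative (\<lambda>t. f (flow i t x)) (at 0)"

fun lder :: "nat list \<Rightarrow> (pt \<Rightarrow> complex) \<Rightarrow> pt \<Rightarrow> complex" where
  "lder [] f = f"
| "lder (i # ws) f = Xd i (lder ws f)"

definition smooth_fun :: "(pt \<Rightarrow> complex) \<Rightarrow> bool" where
  "smooth_fun f \<longleftrightarrow>
     (\<forall>ws. continuous_on Mspace (lder ws f) \<and>
           (\<forall>x\<in>Mspace. \<forall>i<6. (\<lambda>t. lder ws f (flow i t x)) differentiable (at 0)))"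

text \<open>Generator index 0,1,2 = psi^1,psi^2,psi^3; index 3,4,5 = conj psi^1, conj psi^2,
  conj psi^3, where psi^1 = E^1 + i E^2, psi^2 = F^1 + i F^2, psi^3 = E^3 + i F^3.
  A form is given by its coefficient functions on the increasing monomials psi^S,
  S a subset of {0..5}.\<close>
type_synonym form = "nat set \<Rightarrow> pt \<Rightarrow> complex"

definition gen :: "nat set \<Rightarrow> form" where
  "gen S = (\<lambda>U x. if U = S then 1 else 0)"

definition mulf :: "(pt \<Rightarrow> complex) \<Rightarrow> form \<Rightarrow> form" where
  "mulf f \<alpha> = (\<lambda>U x. f x * \<alpha> U x)"

definition wsign :: "nat set \<Rightarrow> nat set \<Rightarrow> complex" where
  "wsign S T = (-1) ^ card {(s, t). s \<in> S \<and> t \<in> T \<and> t < s}"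

definition wedge :: "form \<Rightarrow> form \<Rightarrow> form" where
  "wedge \<alpha> \<beta> = (\<lambda>U x. if U \<subseteq> {..<6}
      then (\<Sum>S\<in>Pow U. wsign S (U - S) * \<alpha> S x * \<beta> (U - S) x) else 0)"

text \<open>The complex frame dual to psi: Z_k with psi^j(Z_k) = delta.\<close>
definition Zd :: "nat \<Rightarrow> (pt \<Rightarrow> complex) \<Rightarrow> pt \<Rightarrow> complex" where
  "Zd k f x =
    (if k = 0 then (Xd 0 f x - \<i> * Xd 1 f x) / 2
     else if k = 1 then (Xd 3 f x - \<i> * Xd 4 f x) / 2
     else if k = 2 then (Xd 2 f x - \<i> * Xd 5 f x) / 2
     else if k = 3 then (Xd 0 f x + \<i> * Xd 1 f x) / 2
     else if k = 4 then (Xd 3 f x + \<i> * Xd 4 f x) / 2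
     else if k = 5 then (Xd 2 f x + \<i> * Xd 5 f x) / 2
     else 0)"

definition dfun :: "(pt \<Rightarrow> complex) \<Rightarrow> form" where
  "dfun f = (\<Sum>k<6. mulf (Zd k f) (gen {k}))"

definition cst :: "complex \<Rightarrow> pt \<Rightarrow> complex" where
  "cst c = (\<lambda>_. c)"

text \<open>Structure equations: d psi^1 = i psi^13 + i psi^1 bar3,
  d psi^2 = psi^23 - psi^2 bar3, d psi^3 = -i psi^1 bar1 + psi^2 bar2,
  and their complex conjugates.\<close>
definition dpsi :: "nat \<Rightarrow> form" where
  "dpsi j =
    (if j = 0 then mulf (cst \<i>) (gen {0,2}) + mulf (cst \<i>) (gen {0,5})
     else if j = 1 then gen {1,2} - gen {1,5}
     else if j = 2 then mulf (cst (-\<i>)) (gen {0,3}) + gen {1,4}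
     else if j = 3 then mulf (cst (-\<i>)) (gen {3,5}) + mulf (cst \<i>) (gen {2,3})
     else if j = 4 then gen {4,5} + gen {2,4}
     else if j = 5 then mulf (cst (-\<i>)) (gen {0,3}) - gen {1,4}
     else 0)"

text \<open>d of the monomial psi^S (Leibniz rule).\<close>
definition dmono :: "nat set \<Rightarrow> form" where
  "dmono S = (\<Sum>j\<in>S. mulf (cst ((-1) ^ card {s\<in>S. s < j})) (wedge (dpsi j) (gen (S - {j}))))"

definition ext_d :: "form \<Rightarrow> form" where
  "ext_d \<alpha> = (\<Sum>S\<in>Pow {..<6}. wedge (dfun (\<alpha> S)) (gen S) + mulf (\<alpha> S) (dmono S))"

definition bideg_ok :: "nat \<Rightarrow> nat \<Rightarrow> nat set \<Rightarrow> bool" where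
  "bideg_ok p q U \<longleftrightarrow> U \<subseteq> {..<6} \<and> card (U \<inter> {0,1,2}) = p \<and> card (U \<inter> {3,4,5}) = q"

definition proj :: "nat \<Rightarrow> nat \<Rightarrow> form \<Rightarrow> form" where
  "proj p q \<alpha> = (\<lambda>U x. if bideg_ok p q U then \<alpha> U x else 0)"

definition del :: "form \<Rightarrow> form" where
  "del \<alpha> = (\<Sum>p\<le>3. \<Sum>q\<le>3. proj (p+1) q (ext_d (proj p q \<alpha>)))"

definition delbar :: "form \<Rightarrow> form" where
  "delbar \<alpha> = (\<Sum>p\<le>3. \<Sum>q\<le>3. proj p (q+1) (ext_d (proj p q \<alpha>)))"

definition smooth_form :: "form \<Rightarrow> bool" where
  "smooth_form \<alpha> \<longleftrightarrow> (\<forall>U. smooth_fun (\<alpha> U))"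

definition is_type :: "nat \<Rightarrow> nat \<Rightarrow> form \<Rightarrow> bool" where
  "is_type p q \<alpha> \<longleftrightarrow> (\<forall>U. \<not> bideg_ok p q U \<longrightarrow> \<alpha> U = (\<lambda>x. 0))"

text \<open>A Hermitian metric g = sum h_jk psi^j (x) conj psi^k, given by a smooth
  positive definite Hermitian matrix function h (indices < 3).\<close>
definition hermitian_metric :: "(nat \<Rightarrow> nat \<Rightarrow> pt \<Rightarrow> complex) \<Rightarrow> bool" where
  "hermitian_metric h \<longleftrightarrow>
     (\<forall>j<3. \<forall>k<3. smooth_fun (h j k)) \<and>
     (\<forall>x\<in>Mspace. \<forall>j<3. \<forall>k<3. h k j x = cnj (h j k x)) \<and>
     (\<forall>x\<in>Mspace. \<forall>v :: nat \<Rightarrow> complex. (\<exists>j<3. v j \<noteq> 0) \<longrightarrow>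
        0 < Re (\<Sum>j<3. \<Sum>k<3. h j k x * v j * cnj (v k)))"

definition fundform :: "(nat \<Rightarrow> nat \<Rightarrow> pt \<Rightarrow> complex) \<Rightarrow> form" where
  "fundform h = (\<Sum>j<3. \<Sum>k<3. mulf (\<lambda>x. \<i> * h j k x) (wedge (gen {j}) (gen {k + 3})))"

definition gauduchon :: "(nat \<Rightarrow> nat \<Rightarrow> pt \<Rightarrow> complex) \<Rightarrow> bool" where
  "gauduchon h \<longleftrightarrow> hermitian_metric h \<and>
     (\<forall>U. \<forall>x\<in>Mspace. del (delbar (wedge (fundform h) (fundform h))) U x = 0)"

definition aeppli_zero :: "nat \<Rightarrow> nat \<Rightarrow> form \<Rightarrow> bool" where
  "aeppli_zero p q \<gamma> \<longleftrightarrow>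
     (\<exists>\<alpha> \<beta>. smooth_form \<alpha> \<and> is_type (p - 1) q \<alpha> \<and>
             smooth_form \<beta> \<and> is_type p (q - 1) \<beta> \<and>
             (\<forall>U. \<forall>x\<in>Mspace. \<gamma> U x = del \<alpha> U x + delbar \<beta> U x))"

end

theory Submission
  imports Defs
begin

lemma sum_form_apply: "(sum (F :: 'i \<Rightarrow> form) A) U x = (\<Sum>a\<in>A. F a U x)"
proof (cases "finite A")
  case True then show ?thesis by (induction A rule: finite_induct) auto
qed simp

lemma wedge_gen_right:
  "wedge a (gen S) U x = (if U \<subseteq> {..<6} \<and> S \<subseteq> U then wsign (U - S) S * a (U - S) x else 0)"
proof (cases "U \<subseteq> {..<6}")
  case True
  have fin: "finite (Pow U)" using True finite_subset by (auto intro: finite_subset)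
  show ?thesis
  proof (cases "S \<subseteq> U")
    case True2: True
    have "(\<Sum>T\<in>Pow U. wsign T (U - T) * a T x * gen S (U - T) x)
        = (\<Sum>T\<in>Pow U. if T = U - S then wsign (U - S) S * a (U - S) x else 0)"
    proof (rule sum.cong)
      fix T assume "T \<in> Pow U"
      then have "(U - T = S) = (T = U - S)" using True2 by auto
      moreover have "T = U - S \<Longrightarrow> U - T = S" using True2 by auto
      ultimately show "wsign T (U - T) * a T x * gen S (U - T) x = (if T = U - S then wsign (U - S) S * a (U - S) x else 0)"
        by (auto simp: gen_def)
    qed simp
    also have "\<dots> = wsign (U - S) S * a (U - S) x" using fin by (simp add: sum.delta')
    finally show ?thesis using True True2 by (simp add: wedge_def)
  next
    case False
    have "(\<Sum>T\<in>Pow U. wsign T (U - T) * a T x * gen S (U - T) x) = 0"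
      by (rule sum.neutral) (use False in \<open>auto simp: gen_def\<close>)
    then show ?thesis using True False by (simp add: wedge_def)
  qed
qed (simp add: wedge_def)

lemma dfun_apply: "dfun f T x = (\<Sum>k<6. if T = {k} then Zd k f x else 0)"
  unfolding dfun_def sum_form_apply by (intro sum.cong refl) (simp add: mulf_def gen_def)

lemma card_pairs: "finite S \<Longrightarrow> finite T \<Longrightarrow>
  card {(s, t). s \<in> S \<and> t \<in> T \<and> t < s} = (\<Sum>s\<in>S. card {t\<in>T. t < (s::nat)})"
proof -
  assume fS: "finite S" and fT: "finite T"
  have "{(s, t). s \<in> S \<and> t \<in> T \<and> t < s} = Sigma S (\<lambda>s. {t\<in>T. t < s})" by auto
  then show ?thesis using fS fT by (simp add: card_SigmaI)
qed

lemma wsign_eq: "finite S \<Longrightarrow> finite T \<Longrightarrow> wsign S T = (-1) ^ (\<Sum>s\<in>S. card {t\<in>T. t < (s::nat)})"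
  by (simp add: wsign_def card_pairs)

lemma Collect_insert_filter: "{t \<in> insert a B. P t} = (if P a then insert a {t\<in>B. P t} else {t\<in>B. P t})"
  by auto

definition U0 :: "nat set" where "U0 = {1,2,4,5}"

lemma subset6_cases:
  assumes "S \<subseteq> {..<6::nat}"
  obtains b0 b1 b2 b3 b4 b5 where "S = (if b0 then {0} else {}) \<union> (if b1 then {1} else {}) \<union>
     (if b2 then {2} else {}) \<union> (if b3 then {3} else {}) \<union> (if b4 then {4} else {}) \<union> (if b5 then {5} else {})"
proof -
  have "S = (if 0\<in>S then {0} else {}) \<union> (if 1\<in>S then {1} else {}) \<union>
     (if 2\<in>S then {2} else {}) \<union> (if 3\<in>S then {3} else {}) \<union> (if 4\<in>S then {4} else {}) \<union> (if 5\<in>S then {5} else {})" (is "S = ?R")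
  proof
    show "S \<subseteq> ?R"
    proof
      fix s assume s: "s \<in> S"
      then have "s < 6" using assms by auto
      then have "s = 0 \<or> s = 1 \<or> s = 2 \<or> s = 3 \<or> s = 4 \<or> s = 5" by auto
      then show "s \<in> (if 0\<in>S then {0} else {}) \<union> (if 1\<in>S then {1} else {}) \<union>
     (if 2\<in>S then {2} else {}) \<union> (if 3\<in>S then {3} else {}) \<union> (if 4\<in>S then {4} else {}) \<union> (if 5\<in>S then {5} else {})"
        using s by auto
    qed
  qed (auto split: if_splits)
  then show ?thesis using that by blast
qed

lemma card_Collect_eq_conj: "card {t. t = a \<and> P t} = (if P a then 1 else 0)"
proof -
  have "{t. t = a \<and> P t} = (if P a then {a} else {})" by auto
  then show ?thesis by simp
qed

lemma card_Collect_disj2: "a \<noteq> b \<Longrightarrow> card {t. (t = a \<or> t = b) \<and> P t} = (if P a then 1 else 0) + (if P b then 1 else 0)"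
proof -
  assume ab: "a \<noteq> b"
  have "{t. (t = a \<or> t = b) \<and> P t} = (if P a then {a} else {}) \<union> (if P b then {b} else {})" by auto
  then show ?thesis using ab by simp
qed

lemma card_Collect_disj3: "a \<noteq> b \<Longrightarrow> a \<noteq> c \<Longrightarrow> b \<noteq> c \<Longrightarrow> card {t. (t = a \<or> t = b \<or> t = c) \<and> P t} = (if P a then 1 else 0) + (if P b then 1 else 0) + (if P c then 1 else 0)"
proof -
  assume ab: "a \<noteq> b" "a \<noteq> c" "b \<noteq> c"
  have "{t. (t = a \<or> t = b \<or> t = c) \<and> P t} = (if P a then {a} else {}) \<union> (if P b then {b} else {}) \<union> (if P c then {c} else {})" by auto
  then show ?thesis using ab by (simp add: card_insert_if)
qed

lemma three_neq_two: "a \<noteq> b \<Longrightarrow> a \<noteq> c \<Longrightarrow> b \<noteq> c \<Longrightarrow> insert a (insert b (insert c C)) \<noteq> {d, e}"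
proof
  assume "a \<noteq> b" "a \<noteq> c" "b \<noteq> c" and eq: "insert a (insert b (insert c C)) = {d, e}"
  then have "{a,b,c} \<subseteq> {d,e}" by auto
  then have "card {a,b,c} \<le> card {d,e}" by (intro card_mono) auto
  moreover have "card {d,e} \<le> 2" by (simp add: card_insert_if)
  ultimately show False using \<open>a \<noteq> b\<close> \<open>a \<noteq> c\<close> \<open>b \<noteq> c\<close> by simp
qed

lemma dmono_U0: "S \<subseteq> {..<6} \<Longrightarrow> dmono S U0 x = 0"
proof -
  assume "S \<subseteq> {..<6}"
  then obtain b0 b1 b2 b3 b4 b5 where S: "S = (if b0 then {0} else {}) \<union> (if b1 then {1} else {}) \<union>
     (if b2 then {2} else {}) \<union> (if b3 then {3} else {}) \<union> (if b4 then {4} else {}) \<union> (if b5 then {5} else {})"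
    by (rule subset6_cases)
  show ?thesis
    unfolding dmono_def sum_form_apply S
    apply (cases b0; cases b1; cases b2; cases b3; cases b4; cases b5)
    apply (simp_all only: if_True if_False Un_empty_left Un_empty_right Un_insert_left insert_is_Un[symmetric])
    apply (simp_all only: mulf_def wedge_gen_right Collect_insert_filter)
    apply (simp_all add: mulf_def cst_def U0_def wsign_eq Collect_insert_filter dpsi_def gen_def doubleton_eq_iff insert_Diff_if card_Collect_eq_conj card_Collect_disj2 card_Collect_disj3 three_neq_two)
    done
qed

lemma U0_sub: "U0 \<subseteq> {..<6}" by (auto simp: U0_def)

lemma wd: "wedge (dfun f) (gen S) U0 x = (\<Sum>k<6. if S \<subseteq> U0 \<and> U0 - S = {k} then wsign (U0 - S) S * Zd k f x else 0)"
proof (cases "S \<subseteq> U0")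
  case True
  have "wedge (dfun f) (gen S) U0 x = wsign (U0 - S) S * dfun f (U0 - S) x"
    using True U0_sub by (simp add: wedge_gen_right)
  also have "\<dots> = (\<Sum>k<6. wsign (U0 - S) S * (if U0 - S = {k} then Zd k f x else 0))"
    by (simp only: dfun_apply sum_distrib_left)
  also have "\<dots> = (\<Sum>k<6. if S \<subseteq> U0 \<and> U0 - S = {k} then wsign (U0 - S) S * Zd k f x else 0)"
    using True by (intro sum.cong refl) simp
  finally show ?thesis .
next
  case False
  then show ?thesis using U0_sub by (simp add: wedge_gen_right)
qed

lemma e_aux: "(S \<subseteq> U0 \<and> U0 - S = {k}) = (S = U0 - {k} \<and> k \<in> (U0::nat set))"
proof
  assume a: "S \<subseteq> U0 \<and> U0 - S = {k}"
  then have k: "k \<in> U0" "k \<notin> S" by auto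
  have "S = U0 - {k}"
  proof (rule set_eqI)
    fix y show "y \<in> S \<longleftrightarrow> y \<in> U0 - {k}"
      using a k by (metis Diff_iff insertI1 insert_Diff_single singletonD subsetD)
  qed
  then show "S = U0 - {k} \<and> k \<in> U0" using k by simp
next
  assume "S = U0 - {k} \<and> k \<in> U0"
  then show "S \<subseteq> U0 \<and> U0 - S = {k}" by auto
qed

lemma inner_sum: "(\<Sum>S\<in>Pow {..<6::nat}. if S \<subseteq> U0 \<and> U0 - S = {k} then F S else 0)
   = (if k \<in> U0 then F (U0 - {k}) else 0)"
proof -
  have "(\<Sum>S\<in>Pow {..<6::nat}. if S \<subseteq> U0 \<and> U0 - S = {k} then F S else 0)
      = (\<Sum>S\<in>Pow {..<6::nat}. if S = U0 - {k} then (if k \<in> U0 then F (U0 - {k}) else 0) else 0)"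
    by (intro sum.cong refl) (simp only: e_aux, simp)
  also have "\<dots> = (if k \<in> U0 then F (U0 - {k}) else 0)"
  proof -
    have "U0 - {k} \<in> Pow {..<6}" using U0_sub by auto
    then show ?thesis by (simp only: sum.delta finite_Pow_iff finite_lessThan if_True)
  qed
  finally show ?thesis .
qed
lemma ext_d_U0: "ext_d \<sigma> U0 x = (\<Sum>k\<in>U0. wsign {k} (U0 - {k}) * Zd k (\<sigma> (U0 - {k})) x)"
proof -
  have "ext_d \<sigma> U0 x = (\<Sum>S\<in>Pow {..<6}. wedge (dfun (\<sigma> S)) (gen S) U0 x + \<sigma> S x * dmono S U0 x)"
    unfolding ext_d_def sum_form_apply by (simp add: mulf_def)
  also have "\<dots> = (\<Sum>S\<in>Pow {..<6}. wedge (dfun (\<sigma> S)) (gen S) U0 x)"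
    by (intro sum.cong refl) (simp add: dmono_U0)
  also have "\<dots> = (\<Sum>S\<in>Pow {..<6}. \<Sum>k<6. if S \<subseteq> U0 \<and> U0 - S = {k} then wsign (U0 - S) S * Zd k (\<sigma> S) x else 0)"
    by (simp only: wd)
  also have "\<dots> = (\<Sum>k<6. \<Sum>S\<in>Pow {..<6}. if S \<subseteq> U0 \<and> U0 - S = {k} then wsign (U0 - S) S * Zd k (\<sigma> S) x else 0)"
    by (fact sum.swap)
  also have "\<dots> = (\<Sum>k<6. if k \<in> U0 then wsign (U0 - (U0 - {k})) (U0 - {k}) * Zd k (\<sigma> (U0 - {k})) x else 0)"
    by (simp only: inner_sum)
  also have "\<dots> = (\<Sum>k\<in>{..<6} \<inter> U0. wsign (U0 - (U0 - {k})) (U0 - {k}) * Zd k (\<sigma> (U0 - {k})) x)"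
    by (simp only: sum.inter_restrict[OF finite_lessThan])
  also have "\<dots> = (\<Sum>k\<in>U0. wsign {k} (U0 - {k}) * Zd k (\<sigma> (U0 - {k})) x)"
  proof -
    have "{..<6} \<inter> U0 = U0" using U0_sub by blast
    moreover have "\<And>k. k \<in> U0 \<Longrightarrow> U0 - (U0 - {k}) = {k}" by blast
    ultimately show ?thesis by (intro sum.cong) auto
  qed
  finally show ?thesis .
qed
lemma bideg_U0: "bideg_ok p q U0 = (p = 2 \<and> q = 2)"
proof -
  have a: "U0 \<inter> {0,1,2} = {1,2}" "U0 \<inter> {3,4,5} = {4,5}" by (auto simp: U0_def)
  have "card {1,2::nat} = 2" "card {4,5::nat} = 2" by simp_all
  then show ?thesis unfolding bideg_ok_def a using U0_sub by auto
qed
lemma proj_type: assumes "is_type p q \<alpha>" shows "proj p q \<alpha> = \<alpha>"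
proof (rule ext)+
  fix U x show "proj p q \<alpha> U x = \<alpha> U x"
  proof (cases "bideg_ok p q U")
    case True then show ?thesis by (simp add: proj_def)
  next
    case False then have "\<alpha> U = (\<lambda>x. 0)" using assms by (simp add: is_type_def)
    then show ?thesis using False by (simp add: proj_def)
  qed
qed

lemma proj_U0: "proj p q \<beta> U0 x = (if p = 2 \<and> q = 2 then \<beta> U0 x else 0)"
  by (simp add: proj_def bideg_U0)

lemma sum16: "(\<Sum>p\<le>3::nat. \<Sum>q\<le>3::nat. if p = a \<and> q = b then F p q else 0) = (if a \<le> 3 \<and> b \<le> 3 then F a b else (0::complex))"
proof -
  have "(\<Sum>p\<le>3::nat. \<Sum>q\<le>3::nat. if p = a \<and> q = b then F p q else 0) = (\<Sum>p\<le>3::nat. if p = a then (\<Sum>q\<le>3::nat. if q = b then F p q else 0) else 0)"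
    by (intro sum.cong refl) auto
  also have "\<dots> = (if a \<le> 3 \<and> b \<le> 3 then F a b else 0)"
    by (simp add: sum.delta')
  finally show ?thesis .
qed

lemma del_U0: "is_type 1 2 \<alpha> \<Longrightarrow> del \<alpha> U0 x = ext_d \<alpha> U0 x"
proof -
  assume t: "is_type 1 2 \<alpha>"
  have "del \<alpha> U0 x = (\<Sum>p\<le>3. \<Sum>q\<le>3. proj (p+1) q (ext_d (proj p q \<alpha>)) U0 x)"
    unfolding del_def sum_form_apply ..
  also have "\<dots> = (\<Sum>p\<le>3. \<Sum>q\<le>3. if p = 1 \<and> q = 2 then ext_d (proj p q \<alpha>) U0 x else 0)"
    by (intro sum.cong refl) (simp only: proj_U0, simp)
  also have "\<dots> = ext_d (proj 1 2 \<alpha>) U0 x"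
    by (simp only: sum16) simp
  finally show ?thesis unfolding proj_type[OF t] .
qed

lemma delbar_U0: "is_type 2 1 \<alpha> \<Longrightarrow> delbar \<alpha> U0 x = ext_d \<alpha> U0 x"
proof -
  assume t: "is_type 2 1 \<alpha>"
  have "delbar \<alpha> U0 x = (\<Sum>p\<le>3. \<Sum>q\<le>3. proj p (q+1) (ext_d (proj p q \<alpha>)) U0 x)"
    unfolding delbar_def sum_form_apply ..
  also have "\<dots> = (\<Sum>p\<le>3. \<Sum>q\<le>3. if p = 2 \<and> q = 1 then ext_d (proj p q \<alpha>) U0 x else 0)"
    by (intro sum.cong refl) (simp only: proj_U0, simp)
  also have "\<dots> = ext_d (proj 2 1 \<alpha>) U0 x"
    by (simp only: sum16) simp
  finally show ?thesis unfolding proj_type[OF t] .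
qed

lemma fundform_apply: "fundform h T x = (\<Sum>j<3. \<Sum>k<3. if T = {j, k+3} then \<i> * h j k x else 0)"
proof -
  have "fundform h T x = (\<Sum>j<3. \<Sum>k<3. \<i> * h j k x * wedge (gen {j}) (gen {k + 3}) T x)"
    unfolding fundform_def sum_form_apply by (simp add: mulf_def)
  also have "\<dots> = (\<Sum>j<3. \<Sum>k<3. if T = {j, k+3} then \<i> * h j k x else 0)"
  proof (intro sum.cong refl)
    fix j k assume j: "j \<in> {..<3::nat}" and k: "k \<in> {..<3::nat}"
    have "wedge (gen {j}) (gen {k + 3}) T x = (if T = {j, k+3} then 1 else 0)"
    proof (cases "T = {j, k+3}")
      case True
      have "wsign {j} {k+3} = 1" using j by (simp add: wsign_eq card_Collect_eq_conj)
      moreover have "{j, k+3} - {k+3} = {j}" using j by auto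
      ultimately show ?thesis using True j k by (simp only: wedge_gen_right) (simp add: gen_def)
    next
      case False
      have "\<not> (T \<subseteq> {..<6} \<and> {k+3} \<subseteq> T \<and> T - {k+3} = {j})" using False by auto
      then show ?thesis using False by (simp only: wedge_gen_right) (auto simp: gen_def)
    qed
    then show "\<i> * h j k x * wedge (gen {j}) (gen {k + 3}) T x = (if T = {j, k+3} then \<i> * h j k x else 0)"
      by simp
  qed
  finally show ?thesis .
qed

lemma sum_Pow_insert: "a \<notin> A \<Longrightarrow> finite A \<Longrightarrow>
  (\<Sum>S\<in>Pow (insert a A). f S) = (\<Sum>S\<in>Pow A. f S) + (\<Sum>S\<in>Pow A. f (insert a S))"
proof -
  assume a: "a \<notin> A" and fin: "finite A"
  have d: "Pow A \<inter> insert a ` Pow A = {}" using a by auto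
  have inj: "inj_on (insert a) (Pow A)" using a unfolding inj_on_def by (metis PowD insert_ident subset_iff)
  have "(\<Sum>S\<in>Pow (insert a A). f S) = (\<Sum>S\<in>Pow A. f S) + (\<Sum>S\<in>insert a ` Pow A. f S)"
    unfolding Pow_insert using fin d by (intro sum.union_disjoint) auto
  also have "(\<Sum>S\<in>insert a ` Pow A. f S) = (\<Sum>S\<in>Pow A. f (insert a S))"
    using inj by (simp add: sum.reindex)
  finally show ?thesis .
qed

lemma Pow_U0_sum: "(\<Sum>S\<in>Pow {1,2,4,5::nat}. f S) = f {} + f {5} + f {4} + f {4,5} + f {2} + f {2,5} + f {2,4} + f {2,4,5}
   + f {1} + f {1,5} + f {1,4} + f {1,4,5} + f {1,2} + f {1,2,5} + f {1,2,4} + f {1,2,4,5}"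
  by (simp add: sum_Pow_insert add.assoc)

lemma ff_vals:
  "fundform h {1,4} x = \<i> * h 1 1 x" "fundform h {1,5} x = \<i> * h 1 2 x"
  "fundform h {2,4} x = \<i> * h 2 1 x" "fundform h {2,5} x = \<i> * h 2 2 x"
  "fundform h {} x = 0" "fundform h {5} x = 0" "fundform h {4} x = 0" "fundform h {4,5} x = 0"
  "fundform h {2} x = 0" "fundform h {1} x = 0" "fundform h {1,2} x = 0"
  "fundform h {2,4,5} x = 0" "fundform h {1,4,5} x = 0" "fundform h {1,2,5} x = 0" "fundform h {1,2,4} x = 0"
  "fundform h {1,2,4,5} x = 0"
  by (simp_all add: fundform_apply lessThan_nat_numeral doubleton_eq_iff three_neq_two)

lemma ws_vals: "wsign {1,4} {2,5} = -1" "wsign {1,5} {2,4} = 1" "wsign {2,4} {1,5} = 1" "wsign {2,5} {1,4} = -1"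
  by (simp_all add: wsign_eq Collect_insert_filter card_Collect_eq_conj card_Collect_disj2)

lemma omega2_U0: "wedge (fundform h) (fundform h) U0 x = 2 * (h 1 1 x * h 2 2 x - h 1 2 x * h 2 1 x)"
proof -
  have "wedge (fundform h) (fundform h) U0 x = (\<Sum>S\<in>Pow {1,2,4,5}. wsign S ({1,2,4,5} - S) * fundform h S x * fundform h ({1,2,4,5} - S) x)"
    by (simp add: wedge_def U0_def)
  also have "\<dots> = 2 * (h 1 1 x * h 2 2 x - h 1 2 x * h 2 1 x)"
    unfolding Pow_U0_sum
    apply (simp only: insert_Diff_if insert_iff empty_iff Diff_empty)
    apply (simp add: ff_vals[simplified] ws_vals[simplified] algebra_simps)
    done
  finally show ?thesis .
qed
lemma sum3: "(\<Sum>j<3::nat. f j) = f 0 + f 1 + f 2"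
  by (simp add: lessThan_nat_numeral add_ac)

lemma det_pos:
  assumes hm: "hermitian_metric h" and x: "x \<in> Mspace"
  shows "0 < Re (h 1 1 x * h 2 2 x - h 1 2 x * h 2 1 x)"
proof -
  have herm: "\<And>j k. j < 3 \<Longrightarrow> k < 3 \<Longrightarrow> h k j x = cnj (h j k x)" using hm x unfolding hermitian_metric_def by blast
  have pos: "\<And>v. (\<exists>j<3. v j \<noteq> 0) \<Longrightarrow> 0 < Re (\<Sum>j<3. \<Sum>k<3. h j k x * v j * cnj (v k))"
    using hm x unfolding hermitian_metric_def by blast
  define a where "a = h 1 1 x"
  define b where "b = h 1 2 x"
  define d where "d = h 2 2 x"
  have a1: "h (Suc 0) (Suc 0) x = a" and b1: "h (Suc 0) 2 x = b" and hb1: "h 2 (Suc 0) x = cnj b"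
    using herm[of 1 2] by (simp_all add: a_def b_def)
  have ha: "cnj a = a" using herm[of 1 1] by (simp add: a_def)
  have hb: "h 2 1 x = cnj b" using herm[of 1 2] by (simp add: b_def)
  have "0 < Re (\<Sum>j<3. \<Sum>k<3. h j k x * (if j = 1 then 1 else 0) * cnj (if k = 1 then 1 else 0))"
    by (rule pos) (rule exI[of _ 1], simp)
  then have apos: "0 < Re a" by (simp add: sum3 a_def)
  have ar: "a = complex_of_real (Re a)" using ha by (simp add: complex_eq_iff)
  define v where "v = (\<lambda>j::nat. if j = 1 then - cnj b else if j = 2 then a else 0)"
  have "v 2 \<noteq> 0" using apos by (auto simp: v_def)
  then have "0 < Re (\<Sum>j<3. \<Sum>k<3. h j k x * v j * cnj (v k))"
    by (intro pos) (rule exI[of _ 2], simp)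
  also have "(\<Sum>j<3. \<Sum>k<3. h j k x * v j * cnj (v k)) = a * (a * d - b * cnj b)"
  proof -
    have "(\<Sum>j<3. \<Sum>k<3. h j k x * v j * cnj (v k)) =
       a * (cnj b * b) + b * (- cnj b) * cnj a + cnj b * a * (- b) + d * a * cnj a"
      by (simp add: sum3 v_def a1 b1 hb1 d_def[symmetric] algebra_simps)
    also have "\<dots> = a * (a * d - b * cnj b)" using ha by (simp add: algebra_simps)
    finally show ?thesis .
  qed
  also have "Re (a * (a * d - b * cnj b)) = Re a * Re (a * d - b * cnj b)"
    by (subst ar) simp
  finally have "0 < Re a * Re (a * d - b * cnj b)" .
  then have "0 < Re (a * d - b * cnj b)" using apos by (simp add: zero_less_mult_iff)
  then show ?thesis using hb1 by (simp add: a_def b_def d_def hb)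
qed
lemma qmult_alt: "qmult x y =
  (fst x * fst y - fst (snd x) * fst (snd y) - fst (snd (snd x)) * fst (snd (snd y)) - snd (snd (snd x)) * snd (snd (snd y)),
   fst x * fst (snd y) + fst (snd x) * fst y + fst (snd (snd x)) * snd (snd (snd y)) - snd (snd (snd x)) * fst (snd (snd y)),
   fst x * fst (snd (snd y)) - fst (snd x) * snd (snd (snd y)) + fst (snd (snd x)) * fst y + snd (snd (snd x)) * fst (snd y),
   fst x * snd (snd (snd y)) + fst (snd x) * fst (snd (snd y)) - fst (snd (snd x)) * fst (snd y) + snd (snd (snd x)) * fst y)"
  by (cases x rule: prod_cases4; cases y rule: prod_cases4) simp

lemma qnorm2_alt: "qnorm2 x = (fst x)^2 + (fst (snd x))^2 + (fst (snd (snd x)))^2 + (snd (snd (snd x)))^2"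
  by (cases x rule: prod_cases4) simp

lemma qnorm2_mult: "qnorm2 (qmult x y) = qnorm2 x * qnorm2 y"
  by (cases x rule: prod_cases4; cases y rule: prod_cases4) (simp add: power2_eq_square algebra_simps)

lemma qmult_assoc: "qmult (qmult x y) z = qmult x (qmult y z)"
  by (cases x rule: prod_cases4; cases y rule: prod_cases4; cases z rule: prod_cases4) (simp add: algebra_simps)

lemma qexp_add: "qmult (qexp a s) (qexp a t) = qexp a (s + t)"
  by (simp add: qexp_def cos_add sin_add algebra_simps)

lemma qmult_one: "qmult x (1,0,0,0) = x"
  by (cases x rule: prod_cases4) simp

lemma qexp_zero: "qexp a 0 = (1,0,0,0)"
  by (simp add: qexp_def)

lemma qnorm2_qexp: "qnorm2 (qexp a t) = 1"
  by (simp add: qexp_def)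

lemma qmult_add: "qmult (x + y) e = qmult x e + qmult y e"
  by (cases x rule: prod_cases4; cases y rule: prod_cases4; cases e rule: prod_cases4) (simp add: algebra_simps)

lemma qmult_scaleR: "qmult (c *\<^sub>R x) e = c *\<^sub>R qmult x e"
  by (cases x rule: prod_cases4; cases e rule: prod_cases4) (simp add: algebra_simps)

lemma qnorm2_scaleR: "qnorm2 (c *\<^sub>R x) = c^2 * qnorm2 x"
  by (cases x rule: prod_cases4) (simp add: algebra_simps power_mult_distrib)

lemma qnorm2_nonneg: "0 \<le> qnorm2 x"
  by (cases x rule: prod_cases4) simp

lemma norm_quat: "norm (x::quat) = sqrt (qnorm2 x)"
  by (cases x rule: prod_cases4) (simp add: norm_prod_def add.assoc)

lemma flow_flow: "flow i s (flow i t p) = flow i (t + s) p"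
  by (simp add: flow_def qmult_assoc qexp_add)

lemma flow_zero: "flow i 0 p = p"
  by (simp add: flow_def qexp_zero qmult_one)

lemma flow_Mspace: "p \<in> Mspace \<Longrightarrow> flow i t p \<in> Mspace"
  by (auto simp: flow_def Mspace_def SU2_def qnorm2_mult qnorm2_qexp)

lemma continuous_qmult[continuous_intros]:
  "continuous_on S f \<Longrightarrow> continuous_on S g \<Longrightarrow> continuous_on S (\<lambda>x. qmult (f x) (g x))"
  unfolding qmult_alt by (intro continuous_intros)

lemma continuous_qexp[continuous_intros]:
  fixes S :: "'a::metric_space set"
  shows "continuous_on S f \<Longrightarrow> continuous_on S (\<lambda>x. qexp a (f x))"
  by (cases "a = 0"; cases "a = 1") (auto simp: qexp_def intro!: continuous_on_Pair continuous_on_cos continuous_on_sin continuous_on_const)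

lemma continuous_flow[continuous_intros]:
  fixes S :: "'a::metric_space set"
  shows "continuous_on S f \<Longrightarrow> continuous_on S g \<Longrightarrow> continuous_on S (\<lambda>x. flow i (f x) (g x))"
  by (cases "i < 3"; cases "i < 6") (simp_all add: flow_def continuous_on_Pair continuous_on_fst continuous_on_snd continuous_qexp continuous_qmult)

lemma compact_SU2: "compact SU2"
proof -
  have "SU2 = {x. qnorm2 x = 1}" by (simp add: SU2_def)
  have "closed {x::quat. qnorm2 x = 1}"
    unfolding qnorm2_alt by (intro closed_Collect_eq continuous_intros)
  moreover have "bounded {x::quat. qnorm2 x = 1}"
    unfolding bounded_iff by (auto simp: norm_quat)
  ultimately show ?thesis by (simp add: SU2_def compact_eq_bounded_closed)
qed

lemma compact_Mspace: "compact Mspace"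
  by (simp add: Mspace_def compact_SU2 compact_Times)

lemma exhaust_8:
  fixes x :: 8
  shows "x = 1 \<or> x = 2 \<or> x = 3 \<or> x = 4 \<or> x = 5 \<or> x = 6 \<or> x = 7 \<or> x = 8"
proof (induct x)
  case (of_int z)
  then have "z = 0 \<or> z = 1 \<or> z = 2 \<or> z = 3 \<or> z = 4 \<or> z = 5 \<or> z = 6 \<or> z = 7" by fastforce
  then show ?case by auto
qed

lemma UNIV_8: "(UNIV :: 8 set) = {1,2,3,4,5,6,7,8}"
  using exhaust_8 by auto

definition AB :: "real^8 \<Rightarrow> pt" where
  "AB v = ((v$1, v$2, v$3, v$4), (v$5, v$6, v$7, v$8))"

definition emb2 :: "pt \<Rightarrow> real^8" where
  "emb2 y = (\<chi> j. if j = 1 then fst (fst y) else if j = 2 then fst (snd (fst y))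
     else if j = 3 then fst (snd (snd (fst y))) else if j = 4 then snd (snd (snd (fst y)))
     else if j = 5 then fst (snd y) else if j = 6 then fst (snd (snd y))
     else if j = 7 then fst (snd (snd (snd y))) else snd (snd (snd (snd y))))"

lemma AB_emb2: "AB (emb2 y) = y"
  by (simp add: AB_def emb2_def)

lemma emb2_AB: "emb2 (AB v) = v"
proof -
  have "emb2 (AB v) $ i = v $ i" for i
    using exhaust_8[of i] by (auto simp: AB_def emb2_def)
  then show ?thesis by (simp add: vec_eq_iff)
qed

lemma sum_8: "sum f (UNIV::8 set) = f 1 + f 2 + f 3 + f 4 + f 5 + f 6 + f 7 + f 8"
  unfolding UNIV_8 by (simp add: ac_simps)
lemma norm8: "norm v = sqrt (qnorm2 (fst (AB v)) + qnorm2 (snd (AB v)))"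
  unfolding norm_vec_def L2_set_def sum_8 by (simp add: AB_def add.assoc)
lemma linear_AB: "linear AB"
  by (rule linearI) (simp_all add: AB_def)

lemma linear_emb2: "linear emb2"
proof (rule linearI)
  fix x y show "emb2 (x + y) = emb2 x + emb2 y"
    by (simp add: emb2_def vec_eq_iff)
next
  fix r x show "emb2 (r *\<^sub>R x) = r *\<^sub>R emb2 x"
    by (simp add: emb2_def vec_eq_iff)
qed

lemma linear_flow: "linear (flow i t)"
  by (rule linearI) (simp_all add: flow_def qmult_add qmult_scaleR)

lemma flow_qnorm2: "qnorm2 (fst (flow i t y)) = qnorm2 (fst y)" "qnorm2 (snd (flow i t y)) = qnorm2 (snd y)"
  by (simp_all add: flow_def qnorm2_mult qnorm2_qexp)

definition Tf :: "nat \<Rightarrow> real \<Rightarrow> real^8 \<Rightarrow> real^8" where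
  "Tf i t v = emb2 (flow i t (AB v))"

lemma orth_Tf: "orthogonal_transformation (Tf i t)"
proof -
  have "linear (Tf i t)"
  proof -
    have "Tf i t = emb2 \<circ> (flow i t \<circ> AB)" by (simp add: Tf_def fun_eq_iff)
    then show ?thesis using linear_AB linear_emb2 linear_flow by (simp add: linear_compose)
  qed
  moreover have "norm (Tf i t v) = norm v" for v
    by (simp add: norm8 Tf_def AB_emb2 flow_qnorm2)
  ultimately show ?thesis by (simp add: orthogonal_transformation)
qed

definition qN :: "quat \<Rightarrow> quat" where "qN q = (1 / sqrt (qnorm2 q)) *\<^sub>R q"
definition Np :: "pt \<Rightarrow> pt" where "Np y = (qN (fst y), qN (snd y))"
definition phi :: "real^8 \<Rightarrow> pt" where "phi v = Np (AB v)"

lemma qN_mult: "qN (qmult q (qexp a t)) = qmult (qN q) (qexp a t)"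
  by (simp add: qN_def qnorm2_mult qnorm2_qexp qmult_scaleR)

lemma Np_flow: "Np (flow i t y) = flow i t (Np y)"
  by (simp add: Np_def flow_def qN_mult)

lemma phi_Tf: "phi (Tf i t v) = flow i t (phi v)"
  by (simp add: phi_def Tf_def AB_emb2 Np_flow)

definition KK :: "(real^8) set" where
  "KK = {v. 1 \<le> qnorm2 (fst (AB v)) \<and> qnorm2 (fst (AB v)) \<le> 4 \<and> 1 \<le> qnorm2 (snd (AB v)) \<and> qnorm2 (snd (AB v)) \<le> 4}"

lemma Tf_KK: "Tf i t ` KK = KK"
proof
  show "Tf i t ` KK \<subseteq> KK" by (auto simp: KK_def Tf_def AB_emb2 flow_qnorm2)
  show "KK \<subseteq> Tf i t ` KK"
  proof
    fix v assume v: "v \<in> KK"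
    have "Tf i t (Tf i (-t) v) = v" by (simp add: Tf_def AB_emb2 flow_flow flow_zero emb2_AB)
    moreover have "Tf i (-t) v \<in> KK" using v by (auto simp: KK_def Tf_def AB_emb2 flow_qnorm2)
    ultimately show "v \<in> Tf i t ` KK" by (metis image_eqI)
  qed
qed

lemma qnorm2_qN: "qnorm2 q \<noteq> 0 \<Longrightarrow> qnorm2 (qN q) = 1"
  using qnorm2_nonneg[of q] by (simp add: qN_def qnorm2_scaleR power_divide)

lemma phi_KK: "v \<in> KK \<Longrightarrow> phi v \<in> Mspace"
  by (auto simp: phi_def Np_def Mspace_def SU2_def KK_def qnorm2_qN)

lemma cont_AB: "continuous_on S AB"
  unfolding AB_def by (intro continuous_intros)

lemma compact_KK: "compact KK"
proof -
  have "closed KK" unfolding KK_def qnorm2_alt AB_def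
    by (intro closed_Collect_conj closed_Collect_le continuous_intros)
  moreover have "bounded KK"
    unfolding bounded_iff by (rule exI[of _ "sqrt 8"]) (auto simp: KK_def norm8)
  ultimately show ?thesis by (simp add: compact_eq_bounded_closed)
qed

lemma cont_phi: "continuous_on KK phi"
proof -
  have "continuous_on KK (\<lambda>v. ((1 / sqrt (qnorm2 (fst (AB v)))) *\<^sub>R fst (AB v), (1 / sqrt (qnorm2 (snd (AB v)))) *\<^sub>R snd (AB v)))"
    unfolding qnorm2_alt AB_def
    by (intro continuous_intros) (auto simp: KK_def AB_def qnorm2_alt)
  then show ?thesis by (simp add: phi_def Np_def qN_def)
qed

lemma absint_compact:
  fixes f :: "real^8 \<Rightarrow> 'b::euclidean_space"
  assumes "compact S" "continuous_on S f"
  shows "f absolutely_integrable_on S"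
proof -
  have i: "integrable lborel (\<lambda>x. indicator S x *\<^sub>R f x)" by (rule borel_integrable_compact[OF assms])
  show ?thesis unfolding set_integrable_def
    using integrable_completion[OF borel_measurable_integrable[OF i]] i by simp
qed

lemma int_compact:
  fixes f :: "real^8 \<Rightarrow> 'b::euclidean_space"
  assumes "compact S" "continuous_on S f"
  shows "f integrable_on S"
  using set_lebesgue_integral_eq_integral(1)[OF absint_compact[OF assms]] .

lemma integral_orth_inv:
  fixes g :: "real^8 \<Rightarrow> real"
  assumes T: "orthogonal_transformation T" and TK: "T ` K = K" and g: "g absolutely_integrable_on K"
  shows "integral K (\<lambda>v. g (T v)) = integral K g"
proof -
  define f where "f = (\<lambda>v. vec (g v) :: real^1)"
  have bl: "bounded_linear (vec :: real \<Rightarrow> real^1)" using linear_conv_bounded_linear linear_vec by blast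
  have fi: "f absolutely_integrable_on K"
    using absolutely_integrable_linear[OF g bl] by (simp add: f_def o_def)
  have lin: "linear T" using T by (simp add: orthogonal_transformation_linear)
  have "integral (T ` K) f = \<bar>det (matrix T)\<bar> *\<^sub>R integral K (f \<circ> T)"
    by (rule integral_change_of_variables_linear[OF lin]) (use fi TK in simp)
  then have eq: "integral K f = integral K (f \<circ> T)" using TK T by simp
  have fT: "(f \<circ> T) absolutely_integrable_on K"
    using absolutely_integrable_change_of_variables_linear[OF lin, where f=f and S=K] fi TK T by (simp add: o_def)
  have "integral K f $ 1 = integral K g"
    using integral_component_eq_cart[OF set_lebesgue_integral_eq_integral(1)[OF fi], of 1] by (simp add: f_def)
  moreover have "integral K (f \<circ> T) $ 1 = integral K (\<lambda>v. g (T v))"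
    using integral_component_eq_cart[OF set_lebesgue_integral_eq_integral(1)[OF fT], of 1] by (simp add: f_def o_def)
  ultimately show ?thesis using eq by simp
qed


definition Lf :: "(pt \<Rightarrow> complex) \<Rightarrow> complex" where
  "Lf G = integral KK (\<lambda>v. G (phi v))"

definition VK :: real where "VK = integral KK (\<lambda>v. 1)"

lemma phi_KK_sub: "phi ` KK \<subseteq> Mspace" using phi_KK by blast

lemma cont_Gphi: "continuous_on Mspace G \<Longrightarrow> continuous_on KK (\<lambda>v. G (phi v))"
  using continuous_on_compose2[OF _ cont_phi phi_KK_sub] by blast

lemma int_Gphi: "continuous_on Mspace (G :: pt \<Rightarrow> complex) \<Longrightarrow> (\<lambda>v. G (phi v)) integrable_on KK"
  by (rule int_compact[OF compact_KK cont_Gphi])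

lemma Lf_add: "continuous_on Mspace G \<Longrightarrow> continuous_on Mspace H \<Longrightarrow> Lf (\<lambda>p. G p + H p) = Lf G + Lf H"
  unfolding Lf_def by (rule integral_add) (auto intro: int_Gphi)

lemma Lf_diff: "continuous_on Mspace G \<Longrightarrow> continuous_on Mspace H \<Longrightarrow> Lf (\<lambda>p. G p - H p) = Lf G - Lf H"
  unfolding Lf_def by (rule integral_diff) (auto intro: int_Gphi)

lemma Lf_cmult: "continuous_on Mspace G \<Longrightarrow> Lf (\<lambda>p. c * G p) = c * Lf G"
proof -
  assume G: "continuous_on Mspace G"
  have "integral KK ((\<lambda>z. c * z) \<circ> (\<lambda>v. G (phi v))) = c * integral KK (\<lambda>v. G (phi v))"
    by (rule integral_linear[OF int_Gphi[OF G]]) (rule bounded_linear_mult_right)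
  then show ?thesis by (simp add: Lf_def o_def)
qed

lemma Lf_cong: "(\<And>p. p \<in> Mspace \<Longrightarrow> G p = H p) \<Longrightarrow> Lf G = Lf H"
  unfolding Lf_def using phi_KK by (intro integral_cong) auto

lemma Lf_sum: "finite A \<Longrightarrow> (\<And>a. a \<in> A \<Longrightarrow> continuous_on Mspace (G a)) \<Longrightarrow> Lf (\<lambda>p. \<Sum>a\<in>A. G a p) = (\<Sum>a\<in>A. Lf (G a))"
proof (induction A rule: finite_induct)
  case empty then show ?case by (simp add: Lf_def)
next
  case (insert a A)
  have "Lf (\<lambda>p. \<Sum>a\<in>insert a A. G a p) = Lf (\<lambda>p. G a p + (\<Sum>a\<in>A. G a p))"
    using insert by simp
  also have "\<dots> = Lf (G a) + Lf (\<lambda>p. \<Sum>a\<in>A. G a p)"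
    using insert by (intro Lf_add) (auto intro!: continuous_intros)
  finally show ?case using insert by simp
qed

lemma VK_eq: "integral KK (\<lambda>v. B) = B * VK"
proof -
  have "(\<lambda>v::real^8. 1::real) integrable_on KK" by (rule integrable_on_const[OF lmeasurable_compact[OF compact_KK]])
  from integral_linear[OF this bounded_linear_mult_right[of B]]
  show ?thesis by (simp add: VK_def o_def)
qed

lemma Lf_bound:
  assumes G: "continuous_on Mspace G" and B: "\<And>p. p \<in> Mspace \<Longrightarrow> norm (G p) \<le> B"
  shows "norm (Lf G) \<le> B * VK"
proof -
  have "norm (Lf G) \<le> integral KK (\<lambda>v. B)"
    unfolding Lf_def
    by (rule integral_norm_bound_integral[OF int_Gphi[OF G] integrable_on_const[OF lmeasurable_compact[OF compact_KK]]])
       (use B phi_KK in auto)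
  then show ?thesis by (simp add: VK_eq)
qed

lemma Lf_invariant:
  assumes G: "continuous_on Mspace G"
  shows "Lf (\<lambda>p. G (flow i t p)) = Lf G"
proof -
  have G': "continuous_on Mspace (\<lambda>p. G (flow i t p))"
    using continuous_on_compose2[OF G continuous_flow[OF continuous_on_const continuous_on_id]] flow_Mspace
    by blast
  have e: "Lf (\<lambda>p. G (flow i t p)) = integral KK (\<lambda>v. G (phi (Tf i t v)))"
    by (simp add: Lf_def phi_Tf)
  have re: "integral KK (\<lambda>v. Re (G (phi (Tf i t v)))) = integral KK (\<lambda>v. Re (G (phi v)))"
    by (rule integral_orth_inv[OF orth_Tf Tf_KK, where g="\<lambda>v. Re (G (phi v))"])
       (intro absint_compact[OF compact_KK] continuous_intros cont_Gphi[OF G])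
  have im: "integral KK (\<lambda>v. Im (G (phi (Tf i t v)))) = integral KK (\<lambda>v. Im (G (phi v)))"
    by (rule integral_orth_inv[OF orth_Tf Tf_KK, where g="\<lambda>v. Im (G (phi v))"])
       (intro absint_compact[OF compact_KK] continuous_intros cont_Gphi[OF G])
  have i1: "(\<lambda>v. G (phi (Tf i t v))) integrable_on KK"
    using int_Gphi[OF G'] by (simp add: phi_Tf)
  have i2: "(\<lambda>v. G (phi v)) integrable_on KK" by (rule int_Gphi[OF G])
  have "Re (integral KK (\<lambda>v. G (phi (Tf i t v)))) = Re (integral KK (\<lambda>v. G (phi v)))"
    using integral_linear[OF i1 bounded_linear_Re] integral_linear[OF i2 bounded_linear_Re] re by (simp add: o_def)
  moreover have "Im (integral KK (\<lambda>v. G (phi (Tf i t v)))) = Im (integral KK (\<lambda>v. G (phi v)))"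
    using integral_linear[OF i1 bounded_linear_Im] integral_linear[OF i2 bounded_linear_Im] im by (simp add: o_def)
  ultimately show ?thesis using e by (simp add: Lf_def complex_eq_iff)
qed


definition boxa :: "real^8" where "boxa = (\<chi> i. if i = 1 \<or> i = 5 then 1 else 0)"
definition boxb :: "real^8" where "boxb = (\<chi> i. if i = 1 \<or> i = 5 then 3/2 else 1/2)"

lemma sq1: "1 \<le> (x::real) \<Longrightarrow> x \<le> 3/2 \<Longrightarrow> 1 \<le> x^2 \<and> x^2 \<le> 9/4"
proof -
  assume a: "1 \<le> x" "x \<le> 3/2"
  have "x^2 \<le> (3/2)^2" by (rule power_mono) (use a in auto)
  moreover have "1 \<le> x^2" using a by (simp add: one_le_power)
  ultimately show ?thesis by (simp add: power2_eq_square)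
qed

lemma sq0: "0 \<le> (x::real) \<Longrightarrow> x \<le> 1/2 \<Longrightarrow> 0 \<le> x^2 \<and> x^2 \<le> 1/4"
proof -
  assume a: "0 \<le> x" "x \<le> 1/2"
  have "x^2 \<le> (1/2)^2" by (rule power_mono) (use a in auto)
  then show ?thesis by (simp add: power2_eq_square)
qed

lemma box_KK: "cbox boxa boxb \<subseteq> KK"
proof
  fix v assume "v \<in> cbox boxa boxb"
  then have h: "\<And>i. boxa $ i \<le> v $ i \<and> v $ i \<le> boxb $ i" by (simp add: mem_box_cart)
  have "1 \<le> v$1 \<and> v$1 \<le> 3/2" "1 \<le> v$5 \<and> v$5 \<le> 3/2"
    using h[of 1] h[of 5] by (simp_all add: boxa_def boxb_def)
  moreover have "0 \<le> v$i \<and> v$i \<le> 1/2" if "i \<noteq> 1" "i \<noteq> 5" for i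
    using h[of i] that by (simp add: boxa_def boxb_def)
  ultimately have b: "1 \<le> (v$1)^2 \<and> (v$1)^2 \<le> 9/4" "1 \<le> (v$5)^2 \<and> (v$5)^2 \<le> 9/4"
     "(v$2)^2 \<le> 1/4" "(v$3)^2 \<le> 1/4" "(v$4)^2 \<le> 1/4" "(v$6)^2 \<le> 1/4" "(v$7)^2 \<le> 1/4" "(v$8)^2 \<le> 1/4"
    using sq1 sq0 by (simp_all add: sq0)
  have nn: "0 \<le> (v$2)^2" "0 \<le> (v$3)^2" "0 \<le> (v$4)^2" "0 \<le> (v$6)^2" "0 \<le> (v$7)^2" "0 \<le> (v$8)^2"
    by simp_all
  show "v \<in> KK" unfolding KK_def AB_def mem_Collect_eq qnorm2.simps fst_conv snd_conv using b nn by linarith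
qed

lemma boxa_in: "boxa \<in> cbox boxa boxb" by (simp add: mem_box_cart boxa_def boxb_def)

lemma VK_pos: "0 < VK"
proof -
  have ne: "cbox boxa boxb \<noteq> {}" using boxa_in by blast
  have c: "measure lborel (cbox boxa boxb) = (\<Prod>i\<in>UNIV. boxb$i - boxa$i)" by (rule content_cbox_cart[OF ne])
  have "0 < (\<Prod>i\<in>UNIV. boxb$i - boxa$i)" by (rule prod_pos) (simp add: boxa_def boxb_def)
  then have cp: "0 < measure lborel (cbox boxa boxb)" using c by simp
  have "integral (cbox boxa boxb) (\<lambda>v. 1::real) \<le> integral KK (\<lambda>v. 1)"
    by (rule integral_subset_le[OF box_KK]) (auto intro: integrable_on_const lmeasurable_compact compact_KK)
  then show ?thesis using cp by (simp add: VK_def)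
qed

lemma Lf_pos:
  assumes G: "continuous_on Mspace G" and P: "\<And>p. p \<in> Mspace \<Longrightarrow> 0 < Re (G p)"
  shows "0 < Re (Lf G)"
proof -
  have ne: "KK \<noteq> {}" using box_KK boxa_in by blast
  have cg: "continuous_on KK (\<lambda>v. Re (G (phi v)))" by (intro continuous_intros cont_Gphi[OF G])
  obtain x0 where x0: "x0 \<in> KK" "\<And>y. y \<in> KK \<Longrightarrow> Re (G (phi x0)) \<le> Re (G (phi y))"
    using continuous_attains_inf[OF compact_KK ne cg] by blast
  have m: "0 < Re (G (phi x0))" using P phi_KK x0(1) by blast
  have "Re (G (phi x0)) * VK = integral KK (\<lambda>v. Re (G (phi x0)))" by (simp add: VK_eq)
  also have "\<dots> \<le> integral KK (\<lambda>v. Re (G (phi v)))"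
    by (rule integral_le) (auto intro: integrable_on_const lmeasurable_compact compact_KK int_compact[OF compact_KK cg] x0(2))
  also have "\<dots> = Re (Lf G)"
    using integral_linear[OF int_Gphi[OF G] bounded_linear_Re] by (simp add: Lf_def o_def)
  finally show ?thesis using m VK_pos by (smt (verit) mult_pos_pos)
qed


lemma smooth_cont: "smooth_fun f \<Longrightarrow> continuous_on Mspace f"
  unfolding smooth_fun_def by (metis lder.simps(1))

lemma smooth_Xd_cont: "smooth_fun f \<Longrightarrow> continuous_on Mspace (Xd i f)"
  unfolding smooth_fun_def by (metis lder.simps)

lemma flow_deriv:
  assumes f: "smooth_fun f" and i: "i < 6" and p: "p \<in> Mspace"
  shows "((\<lambda>s. f (flow i s p)) has_vector_derivative Xd i f (flow i s p)) (at s)"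
proof -
  define q where "q = flow i s p"
  have q: "q \<in> Mspace" using p by (simp add: q_def flow_Mspace)
  have "(\<lambda>t. lder [] f (flow i t q)) differentiable (at 0)"
    using f q i unfolding smooth_fun_def by blast
  then have G: "((\<lambda>t. f (flow i t q)) has_vector_derivative Xd i f q) (at 0)"
    by (simp add: Xd_def vector_derivative_works)
  have sh: "((\<lambda>u. u - s) has_vector_derivative 1) (at s)"
    by (auto intro!: derivative_eq_intros)
  have "(((\<lambda>t. f (flow i t q)) \<circ> (\<lambda>u. u - s)) has_vector_derivative (1 *\<^sub>R Xd i f q)) (at s)"
    by (rule vector_diff_chain_at[OF sh]) (simp add: G)
  moreover have "((\<lambda>t. f (flow i t q)) \<circ> (\<lambda>u. u - s)) = (\<lambda>u. f (flow i u p))"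
    by (simp add: q_def flow_flow o_def)
  ultimately show ?thesis by (simp add: q_def)
qed

lemma Lf_Xd_zero:
  assumes f: "smooth_fun f" and i: "i < 6"
  shows "Lf (Xd i f) = 0"
proof -
  define D where "D = Xd i f"
  have fc: "continuous_on Mspace f" by (rule smooth_cont[OF f])
  have Dc: "continuous_on Mspace D" unfolding D_def by (rule smooth_Xd_cont[OF f])
  have flc: "continuous_on Mspace (\<lambda>p. f (flow i t p))" for t
    using continuous_on_compose2[OF fc continuous_flow[OF continuous_on_const continuous_on_id]] flow_Mspace
    by blast
  have key: "norm (Lf D) \<le> e * VK" if e: "e > 0" for e
  proof -
    define S where "S = {-1..1::real} \<times> Mspace"
    have cS: "compact S" by (simp add: S_def compact_Times compact_Mspace)
    have Hc: "continuous_on S (\<lambda>x. D (flow i (fst x) (snd x)))"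
    proof (rule continuous_on_compose2[OF Dc])
      show "continuous_on S (\<lambda>x. flow i (fst x) (snd x))"
        by (intro continuous_intros)
      show "(\<lambda>x. flow i (fst x) (snd x)) ` S \<subseteq> Mspace" by (auto simp: S_def flow_Mspace)
    qed
    obtain d where d: "d > 0" and dd: "\<And>x x'. x \<in> S \<Longrightarrow> x' \<in> S \<Longrightarrow> dist x' x < d \<Longrightarrow>
        dist (D (flow i (fst x') (snd x'))) (D (flow i (fst x) (snd x))) < e"
      using compact_uniformly_continuous[OF Hc cS] e unfolding uniformly_continuous_on_def by metis
    define t where "t = min (d/2) (1/2)"
    have t: "0 < t" "t < d" "t \<le> 1" using d by (auto simp: t_def)
    define Q where "Q = (\<lambda>p. (1 / complex_of_real t) * (f (flow i t p) - f p) - D p)"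
    have Qb: "norm (Q p) \<le> e" if p: "p \<in> Mspace" for p
    proof -
      have der: "((\<lambda>s. f (flow i s p)) has_derivative (\<lambda>h. h *\<^sub>R D (flow i s p))) (at s within {0..t})" for s
        using flow_deriv[OF f i p, of s] unfolding D_def has_vector_derivative_def
        by (rule has_derivative_at_withinI)
      have "norm ((\<lambda>s. f (flow i s p)) t - (\<lambda>s. f (flow i s p)) 0 - (\<lambda>h. h *\<^sub>R D (flow i 0 p)) (t - 0)) \<le> norm (t - 0) * e"
      proof (rule differentiable_bound_linearization[where S="{0..t}"])
        show "\<And>u. u \<in> {0..1} \<Longrightarrow> 0 + u *\<^sub>R (t - 0) \<in> {0..t}"
          using t by (auto simp: mult_le_cancel_right1 mult_left_le_one_le)
        show "\<And>x. x \<in> {0..t} \<Longrightarrow> ((\<lambda>s. f (flow i s p)) has_derivative (\<lambda>h. h *\<^sub>R D (flow i x p))) (at x within {0..t})"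
          by (rule der)
        show "0 \<in> {0..t}" using t by simp
        show "onorm ((\<lambda>h. h *\<^sub>R D (flow i x p)) - (\<lambda>h. h *\<^sub>R D (flow i 0 p))) \<le> e" if x: "x \<in> {0..t}" for x
        proof (rule onorm_le)
          fix h :: real
          have "(x, p) \<in> S" "(0, p) \<in> S" using x t p by (auto simp: S_def)
          moreover have "dist (x, p) (0, p) < d" using x t by (simp add: dist_Pair_Pair dist_real_def)
          ultimately have "dist (D (flow i x p)) (D (flow i 0 p)) < e" using dd by fastforce
          then have "norm (D (flow i x p) - D (flow i 0 p)) \<le> e" by (simp add: dist_norm)
          then show "norm (((\<lambda>h. h *\<^sub>R D (flow i x p)) - (\<lambda>h. h *\<^sub>R D (flow i 0 p))) h) \<le> e * norm h"
          proof -
            assume a: "norm (D (flow i x p) - D (flow i 0 p)) \<le> e"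
            have "\<bar>h\<bar> * norm (D (flow i x p) - D (flow i 0 p)) \<le> \<bar>h\<bar> * e"
              by (rule mult_left_mono[OF a]) simp
            then show ?thesis by (simp add: scaleR_diff_right[symmetric] mult.commute)
          qed
        qed
      qed
      then have W: "norm (f (flow i t p) - f p - t *\<^sub>R D p) \<le> t * e" using t by (simp add: flow_zero)
      have "Q p = (1 / complex_of_real t) * (f (flow i t p) - f p - t *\<^sub>R D p)"
        using t by (simp add: Q_def scaleR_conv_of_real field_simps)
      then have "norm (Q p) = norm (f (flow i t p) - f p - t *\<^sub>R D p) / t"
        using t by (simp add: norm_mult norm_divide)
      also have "\<dots> \<le> e" using W t by (simp add: divide_le_eq mult.commute)
      finally show ?thesis .
    qed
    have Qc: "continuous_on Mspace Q" unfolding Q_def by (intro continuous_intros flc fc Dc)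
    have "Lf (\<lambda>p. (1 / complex_of_real t) * (f (flow i t p) - f p)) = (1 / complex_of_real t) * (Lf (\<lambda>p. f (flow i t p)) - Lf f)"
    proof -
      have "Lf (\<lambda>p. (1 / complex_of_real t) * (f (flow i t p) - f p)) = (1 / complex_of_real t) * Lf (\<lambda>p. f (flow i t p) - f p)"
        by (rule Lf_cmult) (intro continuous_intros flc fc)
      also have "Lf (\<lambda>p. f (flow i t p) - f p) = Lf (\<lambda>p. f (flow i t p)) - Lf f"
        by (rule Lf_diff[OF flc fc])
      finally show ?thesis .
    qed
    also have "\<dots> = 0" by (simp add: Lf_invariant[OF fc])
    finally have z: "Lf (\<lambda>p. (1 / complex_of_real t) * (f (flow i t p) - f p)) = 0" .
    have "Lf Q = Lf (\<lambda>p. (1 / complex_of_real t) * (f (flow i t p) - f p)) - Lf D"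
      unfolding Q_def by (rule Lf_diff) (intro continuous_intros flc fc Dc)+
    then have "Lf D = - Lf Q" using z by simp
    then show ?thesis using Lf_bound[OF Qc Qb] by simp
  qed
  have "norm (Lf D) = 0"
  proof (rule ccontr)
    assume "norm (Lf D) \<noteq> 0"
    then have pos: "norm (Lf D) > 0" by simp
    have "norm (Lf D) \<le> (norm (Lf D) / (2 * VK)) * VK" by (rule key) (use pos VK_pos in simp)
    then show False using pos VK_pos by (simp add: field_simps)
  qed
  then show ?thesis by (simp add: D_def)
qed


lemma Zd_comb: "k < 6 \<Longrightarrow> \<exists>a b c1 c2. a < 6 \<and> b < 6 \<and> (\<forall>f. Zd k f = (\<lambda>x. c1 * Xd a f x + c2 * Xd b f x))"
proof -
  assume "k < 6"
  then have "k = 0 \<or> k = 1 \<or> k = 2 \<or> k = 3 \<or> k = 4 \<or> k = 5" by auto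
  then show ?thesis
  proof (elim disjE)
    assume "k = 0" then show ?thesis
      by (intro exI[of _ 0] exI[of _ 1] exI[of _ "1/2"] exI[of _ "-\<i>/2"]) (auto simp: Zd_def fun_eq_iff field_simps)
  next
    assume "k = 1" then show ?thesis
      by (intro exI[of _ 3] exI[of _ 4] exI[of _ "1/2"] exI[of _ "-\<i>/2"]) (auto simp: Zd_def fun_eq_iff field_simps)
  next
    assume "k = 2" then show ?thesis
      by (intro exI[of _ 2] exI[of _ 5] exI[of _ "1/2"] exI[of _ "-\<i>/2"]) (auto simp: Zd_def fun_eq_iff field_simps)
  next
    assume "k = 3" then show ?thesis
      by (intro exI[of _ 0] exI[of _ 1] exI[of _ "1/2"] exI[of _ "\<i>/2"]) (auto simp: Zd_def fun_eq_iff field_simps)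
  next
    assume "k = 4" then show ?thesis
      by (intro exI[of _ 3] exI[of _ 4] exI[of _ "1/2"] exI[of _ "\<i>/2"]) (auto simp: Zd_def fun_eq_iff field_simps)
  next
    assume "k = 5" then show ?thesis
      by (intro exI[of _ 2] exI[of _ 5] exI[of _ "1/2"] exI[of _ "\<i>/2"]) (auto simp: Zd_def fun_eq_iff field_simps)
  qed
qed

lemma Zd_props:
  assumes f: "smooth_fun f" and k: "k < 6"
  shows "continuous_on Mspace (Zd k f)" "Lf (Zd k f) = 0"
proof -
  obtain a b c1 c2 where ab: "a < 6" "b < 6" and Z: "\<And>f. Zd k f = (\<lambda>x. c1 * Xd a f x + c2 * Xd b f x)"
    using Zd_comb[OF k] by blast
  have ca: "continuous_on Mspace (Xd a f)" and cb: "continuous_on Mspace (Xd b f)"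
    using smooth_Xd_cont[OF f] by auto
  show "continuous_on Mspace (Zd k f)" unfolding Z by (intro continuous_intros ca cb)
  have "Lf (\<lambda>x. c1 * Xd a f x + c2 * Xd b f x) = Lf (\<lambda>x. c1 * Xd a f x) + Lf (\<lambda>x. c2 * Xd b f x)"
    by (rule Lf_add) (intro continuous_intros ca cb)+
  also have "\<dots> = c1 * Lf (Xd a f) + c2 * Lf (Xd b f)"
    using Lf_cmult[OF ca] Lf_cmult[OF cb] by simp
  also have "\<dots> = 0" using Lf_Xd_zero[OF f ab(1)] Lf_Xd_zero[OF f ab(2)] by simp
  finally show "Lf (Zd k f) = 0" unfolding Z .
qed

theorem mainTheorem9:
  fixes h :: "nat \<Rightarrow> nat \<Rightarrow> pt \<Rightarrow> complex"
  assumes "gauduchon h"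
  shows "\<not> aeppli_zero 2 2 (wedge (fundform h) (fundform h))"
proof
  assume "aeppli_zero 2 2 (wedge (fundform h) (fundform h))"
  then obtain \<alpha> \<beta> where sa: "smooth_form \<alpha>" and ta: "is_type 1 2 \<alpha>" and sb: "smooth_form \<beta>"
    and tb: "is_type 2 1 \<beta>"
    and eq: "\<And>U x. x \<in> Mspace \<Longrightarrow> wedge (fundform h) (fundform h) U x = del \<alpha> U x + delbar \<beta> U x"
    unfolding aeppli_zero_def by auto
  have hm: "hermitian_metric h" using assms by (simp add: gauduchon_def)
  have U0fin: "finite U0" by (simp add: U0_def)
  have U0lt: "\<And>k. k \<in> U0 \<Longrightarrow> k < 6" by (auto simp: U0_def)
  define R where "R = (\<lambda>x. \<Sum>k\<in>U0. wsign {k} (U0 - {k}) * (Zd k (\<alpha> (U0 - {k})) x + Zd k (\<beta> (U0 - {k})) x))"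
  define Dt where "Dt = (\<lambda>x. 2 * (h 1 1 x * h 2 2 x - h 1 2 x * h 2 1 x))"
  have sfa: "\<And>U. smooth_fun (\<alpha> U)" using sa by (simp add: smooth_form_def)
  have sfb: "\<And>U. smooth_fun (\<beta> U)" using sb by (simp add: smooth_form_def)
  have DR: "Dt x = R x" if x: "x \<in> Mspace" for x
  proof -
    have "Dt x = wedge (fundform h) (fundform h) U0 x" by (simp add: Dt_def omega2_U0)
    also have "\<dots> = ext_d \<alpha> U0 x + ext_d \<beta> U0 x" using eq[OF x] del_U0[OF ta] delbar_U0[OF tb] by simp
    also have "\<dots> = R x" by (simp add: ext_d_U0 R_def sum.distrib distrib_left)
    finally show ?thesis .
  qed
  have "Lf Dt = Lf R" by (rule Lf_cong) (simp add: DR)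
  also have "Lf R = (\<Sum>k\<in>U0. Lf (\<lambda>x. wsign {k} (U0 - {k}) * (Zd k (\<alpha> (U0 - {k})) x + Zd k (\<beta> (U0 - {k})) x)))"
    unfolding R_def
    by (rule Lf_sum[OF U0fin]) (intro continuous_intros Zd_props(1) sfa sfb U0lt; assumption)
  also have "\<dots> = 0"
  proof (rule sum.neutral, rule ballI)
    fix k assume k: "k \<in> U0"
    have c1: "continuous_on Mspace (Zd k (\<alpha> (U0 - {k})))" and c2: "continuous_on Mspace (Zd k (\<beta> (U0 - {k})))"
      using Zd_props(1)[OF sfa U0lt[OF k]] Zd_props(1)[OF sfb U0lt[OF k]] by auto
    have "Lf (\<lambda>x. wsign {k} (U0 - {k}) * (Zd k (\<alpha> (U0 - {k})) x + Zd k (\<beta> (U0 - {k})) x))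
        = wsign {k} (U0 - {k}) * Lf (\<lambda>x. Zd k (\<alpha> (U0 - {k})) x + Zd k (\<beta> (U0 - {k})) x)"
      by (rule Lf_cmult) (intro continuous_intros c1 c2)
    also have "Lf (\<lambda>x. Zd k (\<alpha> (U0 - {k})) x + Zd k (\<beta> (U0 - {k})) x) = Lf (Zd k (\<alpha> (U0 - {k}))) + Lf (Zd k (\<beta> (U0 - {k})))"
      by (rule Lf_add[OF c1 c2])
    finally show "Lf (\<lambda>x. wsign {k} (U0 - {k}) * (Zd k (\<alpha> (U0 - {k})) x + Zd k (\<beta> (U0 - {k})) x)) = 0"
      using Zd_props(2)[OF sfa U0lt[OF k]] Zd_props(2)[OF sfb U0lt[OF k]] by simp
  qed
  finally have L0: "Lf Dt = 0" .
  have hc: "\<And>j k. j < 3 \<Longrightarrow> k < 3 \<Longrightarrow> continuous_on Mspace (h j k)"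
    using hm smooth_cont unfolding hermitian_metric_def by blast
  have "continuous_on Mspace Dt" unfolding Dt_def
    by (intro continuous_intros hc) simp_all
  moreover have "0 < Re (Dt p)" if p: "p \<in> Mspace" for p
  proof -
    have d: "0 < Re (h 1 1 p * h 2 2 p - h 1 2 p * h 2 1 p)" by (rule det_pos[OF hm p])
    have eq: "Re (Dt p) = 2 * Re (h 1 1 p * h 2 2 p - h 1 2 p * h 2 1 p)" by (simp add: Dt_def)
    show ?thesis unfolding eq using d by linarith
  qed
  ultimately have "0 < Re (Lf Dt)" by (rule Lf_pos)
  then show False using L0 by simp
qed

end
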